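(* Let $G$ be a connected (directed or undirected) graph with a marked vertex (the origin), and let $F_0,F_1$ be distributions on $\mathbb{R}$ with $F_1$ absolutely continuous w.r.t. $F_0$. Suppose there is a probability distribution $\pi$ on the set $\mathcal{P}$ of infinite self-avoiding paths in $G$ starting at the origin which has an exponential intersection tail with parameter $\eta\in(0,1)$. If $\chi^2(F_0,F_1)<\eta^{-1}-1$, then there is no sequence of tests $(T_m)$ for $H_0$ versus $H_{1,m}$ with $\gamma(T_m)\to0$.
   Context: $\mathcal{P}_m$ denotes the set of self-avoiding paths in $G$ starting at the origin and visiting $m$ vertices. Testing problem: under $H_0$ (law $\mathbf{P}_0$) the variables $X_v$, $v$ a vertex, are i.i.d. $F_0$; under $H_{1,m}$ with unknown path $p\in\mathcal{P}_m$ (law $\mathbf{P}_{1,p}$) they are independent with law $F_1$ for $v\in p$ and $F_0$ otherwise. A test is a measurable $\{0,1\}$-valued function of the $X_v$, with minimax risk $\gamma(T_m)=\mathbf{P}_0(T_m=1)+\sup_{p\in\mathcal{P}_m}\mathbf{P}_{1,p}(T_m=0)$. Exponential intersection tail with parameter $\eta$: there is $C>0$ such that if $P,P'$ are independent samples from $\pi$ and $N$ is the number of vertices they have in common, then $\mathbf{P}(N\ge k)\le C\eta^k$ for all $k\ge1$. Pearson $\chi^2$-distance: with $L=dF_1/dF_0$, $\chi^2(F_0,F_1)=\mathrm{Var}_{F_0}(L)$. *)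

theory Defs
  imports "HOL-Probability.Probability"
begin

text \<open>Graph: vertex type 'v, (directed) edge relation E; undirected graphs are the
  case of a symmetric E.\<close>

definition connected_graph :: "('v \<Rightarrow> 'v \<Rightarrow> bool) \<Rightarrow> 'v \<Rightarrow> bool" where
  "connected_graph E r0 \<longleftrightarrow> (\<forall>v. (r0, v) \<in> ({(a, b). E a b} \<union> {(a, b). E b a})\<^sup>*)"

definition inf_saw :: "('v \<Rightarrow> 'v \<Rightarrow> bool) \<Rightarrow> 'v \<Rightarrow> (nat \<Rightarrow> 'v) set" where
  "inf_saw E r0 = {P. P 0 = r0 \<and> inj P \<and> (\<forall>i. E (P i) (P (Suc i)))}"

definition fin_saw :: "('v \<Rightarrow> 'v \<Rightarrow> bool) \<Rightarrow> 'v \<Rightarrow> nat \<Rightarrow> 'v list set" where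
  "fin_saw E r0 m = {ps. length ps = m \<and> ps \<noteq> [] \<and> hd ps = r0 \<and> distinct ps \<and>
                       (\<forall>i. Suc i < m \<longrightarrow> E (ps ! i) (ps ! Suc i))}"

definition path_space :: "(nat \<Rightarrow> 'v) measure" where
  "path_space = PiM UNIV (\<lambda>_. count_space UNIV)"

definition num_common :: "(nat \<Rightarrow> 'v) \<Rightarrow> (nat \<Rightarrow> 'v) \<Rightarrow> enat" where
  "num_common P P' = (if finite (range P \<inter> range P') then enat (card (range P \<inter> range P')) else \<infinity>)"

definition exp_intersection_tail :: "(nat \<Rightarrow> 'v) measure \<Rightarrow> real \<Rightarrow> bool" where
  "exp_intersection_tail \<pi> \<eta> \<longleftrightarrow>
     (\<exists>C>0. \<forall>k\<ge>1. measure (\<pi> \<Otimes>\<^sub>M \<pi>) {(P, P'). enat k \<le> num_common P P'} \<le> C * \<eta> ^ k)"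

text \<open>Pearson chi-square distance: variance under F0 of L = dF1/dF0
  (as an extended nonnegative real, so that it may be infinite).\<close>
definition chi2 :: "real measure \<Rightarrow> real measure \<Rightarrow> ennreal" where
  "chi2 F0 F1 = (let L = (\<lambda>x. enn2real (RN_deriv F0 F1 x)) in
       \<integral>\<^sup>+ x. ennreal ((L x - (\<integral> y. L y \<partial>F0))\<^sup>2) \<partial>F0)"

definition law0 :: "real measure \<Rightarrow> ('v \<Rightarrow> real) measure" where
  "law0 F0 = PiM UNIV (\<lambda>_. F0)"

definition law1 :: "real measure \<Rightarrow> real measure \<Rightarrow> 'v list \<Rightarrow> ('v \<Rightarrow> real) measure" where
  "law1 F0 F1 p = PiM UNIV (\<lambda>v. if v \<in> set p then F1 else F0)"

definition is_test :: "(('v \<Rightarrow> real) \<Rightarrow> bool) \<Rightarrow> bool" where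
  "is_test T \<longleftrightarrow> T \<in> measurable (PiM UNIV (\<lambda>_::'v. borel)) (count_space UNIV)"

text \<open>Minimax risk; T x = True means the test outputs 1 (reject H0).\<close>
definition risk :: "('v \<Rightarrow> 'v \<Rightarrow> bool) \<Rightarrow> 'v \<Rightarrow> real measure \<Rightarrow> real measure \<Rightarrow> nat
                    \<Rightarrow> (('v \<Rightarrow> real) \<Rightarrow> bool) \<Rightarrow> real" where
  "risk E r0 F0 F1 m T =
     measure (law0 F0) {x \<in> space (law0 F0). T x}
     + (SUP p \<in> fin_saw E r0 m. measure (law1 F0 F1 p) {x \<in> space (law1 F0 F1 p). \<not> T x})"

end

theory Submission
  imports Defs
begin

lemma law0_prod:
  fixes g :: "'v \<Rightarrow> real \<Rightarrow> ennreal"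
  assumes F0: "prob_space F0" and K: "finite K" and g: "\<And>j. j \<in> K \<Longrightarrow> g j \<in> borel_measurable F0"
  shows "(\<integral>\<^sup>+x. (\<Prod>j\<in>K. g j (x j)) \<partial>law0 F0) = (\<Prod>j\<in>K. \<integral>\<^sup>+y. g j y \<partial>F0)"
proof -
  interpret product_prob_space "\<lambda>_::'v. F0" UNIV
    by (simp add: F0 product_prob_space_def product_prob_space_axioms_def product_sigma_finite_def prob_space_imp_sigma_finite)
  have hm: "(\<lambda>y. \<Prod>j\<in>K. g j (y j)) \<in> borel_measurable (PiM K (\<lambda>_. F0))"
    using g by (intro borel_measurable_prod_ennreal) (auto intro: measurable_compose[OF measurable_component_singleton])
  have rm: "(\<lambda>x. restrict x K) \<in> measurable (PiM UNIV (\<lambda>_. F0)) (PiM K (\<lambda>_. F0))"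
    by (rule measurable_restrict_subset) auto
  have "(\<integral>\<^sup>+x. (\<Prod>j\<in>K. g j (x j)) \<partial>law0 F0) = (\<integral>\<^sup>+x. (\<Prod>j\<in>K. g j (restrict x K j)) \<partial>PiM UNIV (\<lambda>_. F0))"
    unfolding law0_def by (intro nn_integral_cong prod.cong) auto
  also have "\<dots> = (\<integral>\<^sup>+y. (\<Prod>j\<in>K. g j (y j)) \<partial>distr (PiM UNIV (\<lambda>_. F0)) (PiM K (\<lambda>_. F0)) (\<lambda>x. restrict x K))"
    using hm by (subst nn_integral_distr[OF rm]) simp_all
  also have "\<dots> = (\<integral>\<^sup>+y. (\<Prod>j\<in>K. g j (y j)) \<partial>PiM K (\<lambda>_. F0))"
    by (subst distr_PiM_restrict_finite) (use K in auto)
  also have "\<dots> = (\<Prod>j\<in>K. \<integral>\<^sup>+y. g j y \<partial>F0)"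
    by (rule product_nn_integral_prod[OF K g])
  finally show ?thesis .
qed

lemma space_borel_eq: "sets F = sets (borel::'a::topological_space measure) \<Longrightarrow> space F = UNIV"
  using sets_eq_imp_space_eq by fastforce

lemma RN_int1:
  assumes F0: "prob_space F0" and F1: "prob_space F1" and s0: "sets F0 = sets borel" and s1: "sets F1 = sets borel"
    and ac: "absolutely_continuous F0 F1" and A: "A \<in> sets borel"
  shows "(\<integral>\<^sup>+y. RN_deriv F0 F1 y * indicator A y \<partial>F0) = emeasure F1 A"
proof -
  interpret sigma_finite_measure F0 using F0 prob_space_imp_sigma_finite by blast
  have "density F0 (RN_deriv F0 F1) = F1" using density_RN_deriv[OF ac] s0 s1 by simp
  then have "emeasure F1 A = emeasure (density F0 (RN_deriv F0 F1)) A" by simp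
  also have "\<dots> = (\<integral>\<^sup>+y. RN_deriv F0 F1 y * indicator A y \<partial>F0)"
    using A s0 by (subst emeasure_density) auto
  finally show ?thesis by simp
qed

lemma RN_int_one:
  assumes F0: "prob_space F0" and F1: "prob_space F1" and s0: "sets F0 = sets borel" and s1: "sets F1 = sets borel"
    and ac: "absolutely_continuous F0 F1"
  shows "(\<integral>\<^sup>+y. RN_deriv F0 F1 y \<partial>F0) = 1"
proof -
  have "(\<integral>\<^sup>+y. RN_deriv F0 F1 y \<partial>F0) = (\<integral>\<^sup>+y. RN_deriv F0 F1 y * indicator UNIV y \<partial>F0)" by simp
  also have "\<dots> = emeasure F1 UNIV" by (rule RN_int1[OF assms]) simp
  also have "\<dots> = 1" using prob_space.emeasure_space_1[OF F1] space_borel_eq[OF s1] by simp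
  finally show ?thesis .
qed

lemma law1_density:
  assumes F0: "prob_space F0" and F1: "prob_space F1" and s0: "sets F0 = sets borel" and s1: "sets F1 = sets borel"
    and ac: "absolutely_continuous F0 F1"
  shows "law1 F0 F1 p = density (law0 F0) (\<lambda>x. \<Prod>v\<in>set p. RN_deriv F0 F1 (x v))"
proof -
  let ?M = "\<lambda>v. if v \<in> set p then F1 else F0"
  let ?r = "RN_deriv F0 F1"
  let ?f = "\<lambda>x. \<Prod>v\<in>set p. ?r (x v)"
  interpret product_prob_space ?M UNIV
    by (simp add: F0 F1 product_prob_space_def product_prob_space_axioms_def product_sigma_finite_def prob_space_imp_sigma_finite)
  have sp0: "space F0 = UNIV" by (rule space_borel_eq[OF s0])
  have sp1: "space F1 = UNIV" by (rule space_borel_eq[OF s1])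
  have setsl: "sets (law0 F0) = sets (PiM UNIV ?M)"
    unfolding law0_def by (rule sets_PiM_cong) (auto simp: s0 s1)
  have fm: "?f \<in> borel_measurable (law0 F0)"
    unfolding law0_def
    by (intro borel_measurable_prod_ennreal measurable_compose[OF measurable_component_singleton]) (auto simp: s0)
  show ?thesis unfolding law1_def
  proof (rule PiM_eq[symmetric])
    show "sets (density (law0 F0) ?f) = sets (PiM UNIV ?M)" using setsl by simp
  next
    fix J F assume J: "finite J" "J \<subseteq> (UNIV::'a set)" and FJ: "\<And>j. j\<in>J \<Longrightarrow> F j \<in> sets (?M j)"
    have FJb: "F j \<in> sets borel" if "j \<in> J" for j using FJ[OF that] s0 s1 by (auto split: if_splits)
    have cyl: "prod_emb UNIV ?M J (Pi\<^sub>E J F) \<in> sets (law0 F0)"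
      unfolding setsl using FJ J by (intro measurable_prod_emb sets_PiM_I_finite) auto
    have ind: "indicator (prod_emb UNIV ?M J (Pi\<^sub>E J F)) x = (\<Prod>j\<in>J. indicator (F j) (x j) :: ennreal)" for x
    proof -
      have "x \<in> prod_emb UNIV ?M J (Pi\<^sub>E J F) \<longleftrightarrow> (\<forall>j\<in>J. x j \<in> F j)"
        by (auto simp: prod_emb_def space_PiM sp0 sp1 PiE_iff)
      then show ?thesis using J(1) by (auto simp: indicator_def)
    qed
    define g where "g j y = (if j \<in> set p then ?r y else 1) * (if j \<in> J then indicator (F j) y else (1::ennreal))" for j y
    have prodeq: "?f x * indicator (prod_emb UNIV ?M J (Pi\<^sub>E J F)) x = (\<Prod>j\<in>J \<union> set p. g j (x j))" for x
    proof -
      have "(\<Prod>j\<in>J \<union> set p. g j (x j)) = (\<Prod>j\<in>J \<union> set p. (if j \<in> set p then ?r (x j) else 1)) * (\<Prod>j\<in>J \<union> set p. (if j \<in> J then indicator (F j) (x j) else (1::ennreal)))"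
        unfolding g_def by (rule prod.distrib)
      also have "(\<Prod>j\<in>J \<union> set p. (if j \<in> set p then ?r (x j) else 1)) = ?f x"
        using J(1) by (subst prod.If_cases) (auto intro!: arg_cong2[where f=prod] simp: Int_absorb1)
      also have "(\<Prod>j\<in>J \<union> set p. (if j \<in> J then indicator (F j) (x j) else (1::ennreal))) = (\<Prod>j\<in>J. indicator (F j) (x j))"
        using J(1) by (subst prod.If_cases) (auto intro!: arg_cong2[where f=prod] simp: Int_absorb1)
      finally show ?thesis using ind by simp
    qed
    have gint: "(\<integral>\<^sup>+y. g j y \<partial>F0) = (if j \<in> J then emeasure (?M j) (F j) else 1)" if "j \<in> J \<union> set p" for j
    proof (cases "j \<in> set p")
      case True
      show ?thesis
      proof (cases "j \<in> J")
        case True2: True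
        show ?thesis using True True2 by (simp add: g_def RN_int1[OF assms FJb[OF True2]])
      next
        case False
        show ?thesis using True False by (simp add: g_def RN_int_one[OF assms])
      qed
    next
      case False
      then have jJ: "j \<in> J" using that by auto
      have "(\<integral>\<^sup>+y. g j y \<partial>F0) = (\<integral>\<^sup>+y. indicator (F j) y \<partial>F0)" using False jJ by (simp add: g_def)
      also have "\<dots> = emeasure F0 (F j)" using FJb[OF jJ] s0 by simp
      finally show ?thesis using False jJ by simp
    qed
    have "emeasure (density (law0 F0) ?f) (prod_emb UNIV ?M J (Pi\<^sub>E J F)) = (\<integral>\<^sup>+x. ?f x * indicator (prod_emb UNIV ?M J (Pi\<^sub>E J F)) x \<partial>law0 F0)"
      by (rule emeasure_density[OF fm cyl])
    also have "\<dots> = (\<integral>\<^sup>+x. (\<Prod>j\<in>J \<union> set p. g j (x j)) \<partial>law0 F0)" by (simp add: prodeq)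
    also have "\<dots> = (\<Prod>j\<in>J \<union> set p. \<integral>\<^sup>+y. g j y \<partial>F0)"
    proof (rule law0_prod[OF F0])
      show "finite (J \<union> set p)" using J(1) by simp
      fix j assume "j \<in> J \<union> set p"
      show "g j \<in> borel_measurable F0"
      proof (cases "j \<in> J")
        case True
        have [measurable]: "F j \<in> sets F0" using FJb[OF True] s0 by simp
        have [measurable]: "Measurable.pred F0 (\<lambda>x. x \<in> F j)" by measurable
        show ?thesis unfolding g_def using True by simp measurable
      next
        case False
        show ?thesis unfolding g_def using False by simp measurable
      qed
    qed
    also have "\<dots> = (\<Prod>j\<in>J \<union> set p. (if j \<in> J then emeasure (?M j) (F j) else 1))"
      by (rule prod.cong) (auto simp: gint)
    also have "\<dots> = (\<Prod>j\<in>J. emeasure (?M j) (F j))"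
      using J(1) by (subst prod.If_cases) (auto intro!: arg_cong2[where f=prod] simp: Int_absorb1)
    finally show "emeasure (density (law0 F0) ?f) (prod_emb UNIV ?M J (Pi\<^sub>E J F)) = (\<Prod>j\<in>J. emeasure (?M j) (F j))" .
  qed
qed

lemma law0_cross:
  assumes F0: "prob_space F0" and F1: "prob_space F1" and s0: "sets F0 = sets borel" and s1: "sets F1 = sets borel"
    and ac: "absolutely_continuous F0 F1" and S: "finite S" "finite S'"
  shows "(\<integral>\<^sup>+x. (\<Prod>v\<in>S. RN_deriv F0 F1 (x v)) * (\<Prod>v\<in>S'. RN_deriv F0 F1 (x v)) \<partial>law0 F0)
       = (\<integral>\<^sup>+y. RN_deriv F0 F1 y * RN_deriv F0 F1 y \<partial>F0) ^ card (S \<inter> S')"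
proof -
  let ?r = "RN_deriv F0 F1"
  define g where "g j y = ?r y * (if j \<in> S \<inter> S' then ?r y else 1)" for j y
  have pe: "(\<Prod>v\<in>S. ?r (x v)) * (\<Prod>v\<in>S'. ?r (x v)) = (\<Prod>j\<in>S \<union> S'. g j (x j))" for x
  proof -
    have "(\<Prod>v\<in>S. ?r (x v)) * (\<Prod>v\<in>S'. ?r (x v)) = (\<Prod>v\<in>S \<union> S'. ?r (x v)) * (\<Prod>v\<in>S \<inter> S'. ?r (x v))"
      using S by (rule prod.union_inter[symmetric])
    also have "(\<Prod>v\<in>S \<inter> S'. ?r (x v)) = (\<Prod>j\<in>S \<union> S'. (if j \<in> S \<inter> S' then ?r (x j) else 1))"
      using S by (subst prod.If_cases) (auto intro!: arg_cong2[where f=prod])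
    finally show ?thesis unfolding g_def by (simp add: prod.distrib)
  qed
  have gi: "(\<integral>\<^sup>+y. g j y \<partial>F0) = (if j \<in> S \<inter> S' then (\<integral>\<^sup>+y. ?r y * ?r y \<partial>F0) else 1)" for j
    by (cases "j \<in> S \<inter> S'") (auto simp: g_def RN_int_one[OF F0 F1 s0 s1 ac])
  have "(\<integral>\<^sup>+x. (\<Prod>v\<in>S. ?r (x v)) * (\<Prod>v\<in>S'. ?r (x v)) \<partial>law0 F0) = (\<integral>\<^sup>+x. (\<Prod>j\<in>S \<union> S'. g j (x j)) \<partial>law0 F0)"
    by (simp add: pe)
  also have "\<dots> = (\<Prod>j\<in>S \<union> S'. \<integral>\<^sup>+y. g j y \<partial>F0)"
    by (rule law0_prod[OF F0]) (use S s0 in \<open>auto simp: g_def\<close>)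
  also have "\<dots> = (\<Prod>j\<in>S \<union> S'. (if j \<in> S \<inter> S' then (\<integral>\<^sup>+y. ?r y * ?r y \<partial>F0) else 1))"
    by (simp add: gi)
  also have "\<dots> = (\<integral>\<^sup>+y. ?r y * ?r y \<partial>F0) ^ card (S \<inter> S')"
  proof -
    have "(\<Prod>j\<in>S \<union> S'. (if j \<in> S \<inter> S' then (\<integral>\<^sup>+y. ?r y * ?r y \<partial>F0) else 1))
        = (\<Prod>j\<in>S \<inter> S'. (if j \<in> S \<inter> S' then (\<integral>\<^sup>+y. ?r y * ?r y \<partial>F0) else 1))"
      by (rule prod.mono_neutral_right) (use S in auto)
    then show ?thesis by simp
  qed
  finally show ?thesis .
qed

lemma chi2_q:
  assumes F0: "prob_space F0" and F1: "prob_space F1" and s0: "sets F0 = sets borel" and s1: "sets F1 = sets borel"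
    and ac: "absolutely_continuous F0 F1" and fin: "chi2 F0 F1 < \<infinity>"
  shows "(\<integral>\<^sup>+y. RN_deriv F0 F1 y * RN_deriv F0 F1 y \<partial>F0) = 1 + chi2 F0 F1"
proof -
  let ?r = "RN_deriv F0 F1"
  let ?L = "\<lambda>x. enn2real (?r x)"
  interpret F0: prob_space F0 by (rule F0)
  have rfin: "AE x in F0. ?r x \<noteq> \<infinity>"
    by (rule F0.RN_deriv_finite) (use F1 prob_space_imp_sigma_finite ac s0 s1 in auto)
  have eqL: "AE x in F0. ?r x = ennreal (?L x)"
    using rfin by eventually_elim (simp add: less_top)
  have Lm[measurable]: "?L \<in> borel_measurable F0" by measurable
  have nL: "(\<integral>\<^sup>+x. ennreal (?L x) \<partial>F0) = 1"
  proof -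
    have "(\<integral>\<^sup>+x. ennreal (?L x) \<partial>F0) = (\<integral>\<^sup>+x. ?r x \<partial>F0)"
      by (rule nn_integral_cong_AE) (use eqL in \<open>eventually_elim, simp\<close>)
    also have "\<dots> = 1" by (rule RN_int_one[OF F0 F1 s0 s1 ac])
    finally show ?thesis .
  qed
  have int1: "(\<integral>y. ?L y \<partial>F0) = 1"
    by (subst integral_eq_nn_integral) (auto simp: nL)
  have c2: "chi2 F0 F1 = (\<integral>\<^sup>+x. ennreal ((?L x - 1)\<^sup>2) \<partial>F0)"
    unfolding chi2_def Let_def int1 ..
  have pw: "ennreal ((?L x)\<^sup>2) + 1 = ennreal ((?L x - 1)\<^sup>2) + 2 * ennreal (?L x)" for x
  proof -
    have "ennreal ((?L x)\<^sup>2) + 1 = ennreal ((?L x)\<^sup>2 + 1)" by simp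
    also have "(?L x)\<^sup>2 + 1 = (?L x - 1)\<^sup>2 + 2 * ?L x" by (simp add: power2_eq_square algebra_simps)
    also have "ennreal \<dots> = ennreal ((?L x - 1)\<^sup>2) + ennreal (2 * ?L x)" by (simp add: ennreal_plus)
    also have "ennreal (2 * ?L x) = 2 * ennreal (?L x)" by (simp add: ennreal_mult)
    finally show ?thesis .
  qed
  have "(\<integral>\<^sup>+x. ennreal ((?L x)\<^sup>2) \<partial>F0) + 1 = (\<integral>\<^sup>+x. ennreal ((?L x)\<^sup>2) + 1 \<partial>F0)"
    by (subst nn_integral_add) (auto simp: F0.emeasure_space_1)
  also have "\<dots> = (\<integral>\<^sup>+x. ennreal ((?L x - 1)\<^sup>2) + 2 * ennreal (?L x) \<partial>F0)" by (simp only: pw)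
  also have "\<dots> = chi2 F0 F1 + 2" 
    by (subst nn_integral_add) (auto simp: c2 nn_integral_cmult nL)
  finally have e: "(\<integral>\<^sup>+x. ennreal ((?L x)\<^sup>2) \<partial>F0) + 1 = (chi2 F0 F1 + 1) + 1"
    by (simp add: add.assoc one_add_one)
  have "(\<integral>\<^sup>+x. ennreal ((?L x)\<^sup>2) \<partial>F0) = chi2 F0 F1 + 1"
    using e by (subst (asm) add.commute, subst (asm) (2) add.commute) (simp add: ennreal_add_left_cancel)
  moreover have "(\<integral>\<^sup>+y. ?r y * ?r y \<partial>F0) = (\<integral>\<^sup>+x. ennreal ((?L x)\<^sup>2) \<partial>F0)"
    by (rule nn_integral_cong_AE) (use eqL in \<open>eventually_elim, simp add: power2_eq_square ennreal_mult\<close>)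
  ultimately show ?thesis by (simp add: add.commute)
qed

lemma nc_sets:
  fixes k :: nat
  shows "{(P, P'). enat k \<le> num_common P P'} \<in> sets (path_space \<Otimes>\<^sub>M (path_space :: (nat \<Rightarrow> 'v::countable) measure))"
proof -
  let ?M = "path_space \<Otimes>\<^sub>M (path_space :: (nat \<Rightarrow> 'v::countable) measure)"
  let ?SS = "{S::'v set. finite S \<and> card S = k}"
  have sp: "space ?M = UNIV" by (auto simp: path_space_def space_pair_measure space_PiM)
  have eq: "{(P, P'). enat k \<le> num_common P P'} = {z \<in> space ?M. \<exists>S\<in>?SS. \<forall>s\<in>S. (\<exists>i. fst z i = s) \<and> (\<exists>i. snd z i = s)}"
  proof (rule set_eqI)
    fix z :: "(nat \<Rightarrow> 'v) \<times> (nat \<Rightarrow> 'v)"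
    obtain P P' where z: "z = (P, P')" by (cases z)
    let ?I = "range P \<inter> range P'"
    have "enat k \<le> num_common P P' \<longleftrightarrow> (\<exists>S\<in>?SS. S \<subseteq> ?I)"
    proof (cases "finite ?I")
      case True
      have "enat k \<le> num_common P P' \<longleftrightarrow> k \<le> card ?I" using True by (simp add: num_common_def)
      also have "\<dots> \<longleftrightarrow> (\<exists>S\<in>?SS. S \<subseteq> ?I)"
      proof
        assume "k \<le> card ?I"
        then obtain T where "T \<subseteq> ?I" "card T = k" "finite T" by (rule obtain_subset_with_card_n)
        then show "\<exists>S\<in>?SS. S \<subseteq> ?I" by blast
      next
        assume "\<exists>S\<in>?SS. S \<subseteq> ?I"
        then obtain S where "S \<in> ?SS" "S \<subseteq> ?I" by blast
        then show "k \<le> card ?I" using True card_mono by fastforce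
      qed
      finally show ?thesis .
    next
      case False
      then obtain B where "finite B" "card B = k" "B \<subseteq> ?I" using infinite_arbitrarily_large by blast
      then show ?thesis using False by (auto simp: num_common_def)
    qed
    then show "z \<in> {(P, P'). enat k \<le> num_common P P'} \<longleftrightarrow> z \<in> {z \<in> space ?M. \<exists>S\<in>?SS. \<forall>s\<in>S. (\<exists>i. fst z i = s) \<and> (\<exists>i. snd z i = s)}"
      unfolding z sp subset_eq image_def by (simp add: eq_commute[of _ "P _"] eq_commute[of _ "P' _"])
  qed
  have "{z \<in> space ?M. \<exists>S\<in>?SS. \<forall>s\<in>S. (\<exists>i. fst z i = s) \<and> (\<exists>i. snd z i = s)} \<in> sets ?M"
  proof (rule sets.sets_Collect_countable_Ex')
    show "countable ?SS" by (rule countable_subset[OF _ countable_Collect_finite]) auto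
  next
    fix S assume "S \<in> ?SS"
    then have fS: "finite S" by simp
    have [measurable]: "(\<lambda>z. fst z i) \<in> measurable ?M (count_space UNIV)" for i
      unfolding path_space_def by measurable
    have [measurable]: "(\<lambda>z. snd z i) \<in> measurable ?M (count_space UNIV)" for i
      unfolding path_space_def by measurable
    have "Measurable.pred ?M (\<lambda>z. \<forall>s\<in>S. (\<exists>i. fst z i = s) \<and> (\<exists>i. snd z i = s))"
      using fS by measurable
    then show "{z \<in> space ?M. \<forall>s\<in>S. (\<exists>i. fst z i = s) \<and> (\<exists>i. snd z i = s)} \<in> sets ?M"
      by (simp add: pred_def)
  qed
  then show ?thesis using eq by simp
qed

definition Hb :: "real \<Rightarrow> (nat \<Rightarrow> 'v) \<times> (nat \<Rightarrow> 'v) \<Rightarrow> ennreal" where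
  "Hb Q z = 1 + (\<Sum>k. ennreal (Q^(Suc k) - Q^k) * indicator {(P, P'). enat (Suc k) \<le> num_common P P'} z)"

lemma Hb_ge:
  assumes Q: "1 \<le> Q" and c: "enat c \<le> num_common (fst z) (snd z)"
  shows "ennreal (Q^c) \<le> Hb Q z"
proof -
  let ?d = "\<lambda>k. ennreal (Q^(Suc k) - Q^k) * indicator {(P, P'). enat (Suc k) \<le> num_common P P'} z"
  have mono: "Q^k \<le> Q^(Suc k)" for k using Q by (simp add: power_increasing)
  have "Q^c = 1 + (\<Sum>k<c. Q^(Suc k) - Q^k)" by (induction c) (simp_all add: algebra_simps)
  moreover have s0: "0 \<le> (\<Sum>k<c. Q^(Suc k) - Q^k)" by (rule sum_nonneg) (use mono in auto)
  ultimately have "ennreal (Q^c) = ennreal 1 + ennreal (\<Sum>k<c. Q^(Suc k) - Q^k)"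
    by (simp only:) (rule ennreal_plus; simp add: s0)
  also have "ennreal (\<Sum>k<c. Q^(Suc k) - Q^k) = (\<Sum>k<c. ennreal (Q^(Suc k) - Q^k))"
    by (rule sum_ennreal[symmetric]) (use mono in auto)
  also have "(\<Sum>k<c. ennreal (Q^(Suc k) - Q^k)) = (\<Sum>k<c. ?d k)"
  proof (rule sum.cong)
    fix k assume "k \<in> {..<c}"
    then have "enat (Suc k) \<le> num_common (fst z) (snd z)" using c
      by (meson Suc_leI enat_ord_simps(1) order_trans lessThan_iff)
    then show "ennreal (Q^(Suc k) - Q^k) = ?d k" by (cases z) (simp add: indicator_def)
  qed simp
  also have "(\<Sum>k<c. ?d k) \<le> (\<Sum>k. ?d k)" by (rule sum_le_suminf) (auto intro: summableI)
  finally show ?thesis unfolding Hb_def by (simp add: add_left_mono)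
qed

lemma Hb_int:
  fixes \<mu> :: "((nat \<Rightarrow> 'v::countable) \<times> (nat \<Rightarrow> 'v)) measure"
  assumes \<mu>: "prob_space \<mu>" and s\<mu>: "sets \<mu> = sets (path_space \<Otimes>\<^sub>M path_space)"
    and Q: "1 \<le> Q" "0 < \<eta>" "Q * \<eta> < 1" and C: "C > 0"
    and tail: "\<forall>k\<ge>1. measure \<mu> {(P,P'). enat k \<le> num_common P P'} \<le> C * \<eta>^k"
  shows "(\<integral>\<^sup>+z. Hb Q z \<partial>\<mu>) \<le> ennreal (1 + (Q - 1) * C * \<eta> / (1 - Q*\<eta>))"
proof -
  interpret prob_space \<mu> by (rule \<mu>)
  let ?A = "\<lambda>k. {(P, P'). enat k \<le> num_common P P'} :: ((nat \<Rightarrow> 'v) \<times> (nat \<Rightarrow> 'v)) set"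
  have As[measurable]: "?A k \<in> sets \<mu>" for k using nc_sets[of k] s\<mu> by simp
  have mono: "Q^k \<le> Q^(Suc k)" for k using Q by (simp add: power_increasing)
  define B where "B = (Q - 1) * C * \<eta> / (1 - Q*\<eta>)"
  have B0: "0 \<le> B" unfolding B_def using Q C by simp
  have e1: "(\<integral>\<^sup>+z. Hb Q z \<partial>\<mu>) = 1 + (\<integral>\<^sup>+z. (\<Sum>k. ennreal (Q^(Suc k) - Q^k) * indicator (?A (Suc k)) z) \<partial>\<mu>)"
    unfolding Hb_def by (subst nn_integral_add) (auto simp: emeasure_space_1)
  have e2: "(\<integral>\<^sup>+z. (\<Sum>k. ennreal (Q^(Suc k) - Q^k) * indicator (?A (Suc k)) z) \<partial>\<mu>)
      = (\<Sum>k. \<integral>\<^sup>+z. ennreal (Q^(Suc k) - Q^k) * indicator (?A (Suc k)) z \<partial>\<mu>)"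
    by (rule nn_integral_suminf) measurable
  have e3: "(\<Sum>k. \<integral>\<^sup>+z. ennreal (Q^(Suc k) - Q^k) * indicator (?A (Suc k)) z \<partial>\<mu>)
      = (\<Sum>k. ennreal (Q^(Suc k) - Q^k) * emeasure \<mu> (?A (Suc k)))"
    by (simp add: nn_integral_cmult_indicator)
  have e4: "(\<Sum>k. ennreal (Q^(Suc k) - Q^k) * emeasure \<mu> (?A (Suc k))) \<le> (\<Sum>k. ennreal ((Q - 1) * C * \<eta> * (Q * \<eta>)^k))"
  proof (rule suminf_le)
    fix k
    have m: "measure \<mu> (?A (Suc k)) \<le> C * \<eta>^(Suc k)" using tail[rule_format, of "Suc k"] by simp
    have "ennreal (Q^(Suc k) - Q^k) * emeasure \<mu> (?A (Suc k)) = ennreal ((Q^(Suc k) - Q^k) * measure \<mu> (?A (Suc k)))"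
      using mono by (simp add: emeasure_eq_measure ennreal_mult)
    also have "\<dots> \<le> ennreal ((Q^(Suc k) - Q^k) * (C * \<eta>^(Suc k)))"
      using mono m by (intro ennreal_leI mult_left_mono) auto
    also have "(Q^(Suc k) - Q^k) * (C * \<eta>^(Suc k)) = (Q - 1) * C * \<eta> * (Q * \<eta>)^k"
      by (simp add: power_mult_distrib algebra_simps)
    finally show "ennreal (Q^(Suc k) - Q^k) * emeasure \<mu> (?A (Suc k)) \<le> ennreal ((Q - 1) * C * \<eta> * (Q * \<eta>)^k)" .
  qed (auto intro: summableI)
  have e5: "(\<Sum>k. ennreal ((Q - 1) * C * \<eta> * (Q * \<eta>)^k)) = ennreal (\<Sum>k. (Q - 1) * C * \<eta> * (Q * \<eta>)^k)"
  proof (rule suminf_ennreal2)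
    show "0 \<le> (Q - 1) * C * \<eta> * (Q * \<eta>)^k" for k using Q C by simp
    show "summable (\<lambda>k. (Q - 1) * C * \<eta> * (Q * \<eta>)^k)"
      using Q by (intro summable_mult summable_geometric) simp
  qed
  have e6: "(\<Sum>k. (Q - 1) * C * \<eta> * (Q * \<eta>)^k) = B"
  proof -
    have "abs (Q * \<eta>) < 1" using Q by simp
    then show ?thesis unfolding B_def by (simp add: suminf_mult suminf_geometric summable_geometric divide_inverse)
  qed
  have "(\<integral>\<^sup>+z. Hb Q z \<partial>\<mu>) \<le> 1 + ennreal B"
    unfolding e1 e2 e3 using e4 e5 e6 by (simp add: add_left_mono)
  also have "1 + ennreal B = ennreal (1 + B)" using B0 by simp
  finally show ?thesis unfolding B_def .
qed

lemma amgm_enn: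
  fixes a :: ennreal and d :: real
  assumes d: "0 < d"
  shows "a \<le> ennreal (1/(4*d)) + ennreal d * (a * a)"
proof (cases a)
  case (real t)
  have "0 \<le> d * (t - 1/(2*d))\<^sup>2" using d by simp
  also have "d * (t - 1/(2*d))\<^sup>2 = 1/(4*d) + d * (t * t) - t"
    using d by (simp add: power2_eq_square field_simps)
  finally have le: "t \<le> 1/(4*d) + d * (t * t)" by simp
  have eqn: "ennreal (1/(4*d)) + ennreal d * (a * a) = ennreal (1/(4*d) + d * (t * t))"
    using real d by (simp add: ennreal_mult[symmetric] ennreal_plus[symmetric] del: ennreal_plus)
  have "a \<le> ennreal (1/(4*d) + d * (t * t))" unfolding real by (rule ennreal_leI[OF le])
  then show ?thesis by (subst eqn)
next
  case top
  then show ?thesis using d by (simp add: ennreal_mult_top)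
qed

lemma pm_meas: "(\<lambda>P. map P [0..<m]) \<in> measurable (path_space :: (nat \<Rightarrow> 'v::countable) measure) (count_space UNIV)"
proof -
  have [measurable]: "(\<lambda>P. P i) \<in> measurable (path_space :: (nat \<Rightarrow> 'v::countable) measure) (count_space UNIV)" for i
    unfolding path_space_def by measurable
  have eq: "(map P [0..<m] = a) \<longleftrightarrow> (length a = m \<and> (\<forall>i\<in>{..<m}. P i = a ! i))" for P :: "nat \<Rightarrow> 'v" and a
    by (auto simp: list_eq_iff_nth_eq)
  have pr: "Measurable.pred path_space (\<lambda>P::nat \<Rightarrow> 'v. map P [0..<m] = a)" for a
    unfolding eq by measurable
  show ?thesis unfolding measurable_count_space_eq2_countable
  proof (intro conjI ballI)
    fix a :: "'v list"
    have "(\<lambda>P. map P [0..<m]) -` {a} \<inter> space path_space = {P \<in> space path_space. map P [0..<m] = a}" by auto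
    then show "(\<lambda>P. map P [0..<m]) -` {a} \<inter> space path_space \<in> sets path_space"
      using pr[of a] by (simp add: pred_def)
  qed simp
qed

lemma fpm_meas:
  assumes g: "g \<in> measurable N (path_space :: (nat \<Rightarrow> 'v::countable) measure)"
    and h: "h \<in> measurable N (law0 F0)" and s0: "sets F0 = sets (borel :: real measure)"
  shows "(\<lambda>w. \<Prod>v\<in>set (map (g w) [0..<m]). RN_deriv F0 F1 (h w v)) \<in> borel_measurable N"
proof -
  have "(\<lambda>w. \<Prod>v\<in>set l. RN_deriv F0 F1 (h w v)) \<in> borel_measurable N" for l :: "'v list"
  proof (intro borel_measurable_prod_ennreal)
    fix v
    have "(\<lambda>w. h w v) \<in> measurable N F0"
      using measurable_compose[OF h, of "\<lambda>x. x v" F0] unfolding law0_def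
      by (simp add: measurable_component_singleton)
    then show "(\<lambda>w. RN_deriv F0 F1 (h w v)) \<in> borel_measurable N"
      by (rule measurable_compose) simp
  qed
  moreover have "(\<lambda>w. map (g w) [0..<m]) \<in> measurable N (count_space UNIV)"
    using measurable_compose[OF g pm_meas] by simp
  ultimately show ?thesis
    by (rule measurable_compose_countable[where f="\<lambda>l w. \<Prod>v\<in>set l. RN_deriv F0 F1 (h w v)"])
qed

lemma card_le_nc:
  "enat (card (set (map P [0..<m]) \<inter> set (map P' [0..<m]))) \<le> num_common P P'"
proof (cases "finite (range P \<inter> range P')")
  case True
  have "set (map P [0..<m]) \<inter> set (map P' [0..<m]) \<subseteq> range P \<inter> range P'" by auto
  then have "card (set (map P [0..<m]) \<inter> set (map P' [0..<m])) \<le> card (range P \<inter> range P')"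
    using True by (rule card_mono[rotated])
  then show ?thesis using True by (simp add: num_common_def)
next
  case False
  then show ?thesis by (simp add: num_common_def)
qed

theorem theorem5p3:
  fixes E :: "'v::countable \<Rightarrow> 'v \<Rightarrow> bool" and r0 :: 'v
    and F0 F1 :: "real measure" and \<pi> :: "(nat \<Rightarrow> 'v) measure" and \<eta> :: real
  assumes "connected_graph E r0"
    and "prob_space F0" "prob_space F1" "sets F0 = sets borel" "sets F1 = sets borel"
    and "absolutely_continuous F0 F1"
    and "prob_space \<pi>" "sets \<pi> = sets path_space" "AE P in \<pi>. P \<in> inf_saw E r0"
    and "0 < \<eta>" "\<eta> < 1" "exp_intersection_tail \<pi> \<eta>"
    and "chi2 F0 F1 < ennreal (1 / \<eta> - 1)"
  shows "\<not> (\<exists>T :: nat \<Rightarrow> ('v \<Rightarrow> real) \<Rightarrow> bool.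
             (\<forall>m. is_test (T m)) \<and> (\<lambda>m. risk E r0 F0 F1 m (T m)) \<longlonglongrightarrow> 0)"
proof
  assume "\<exists>T :: nat \<Rightarrow> ('v \<Rightarrow> real) \<Rightarrow> bool. (\<forall>m. is_test (T m)) \<and> (\<lambda>m. risk E r0 F0 F1 m (T m)) \<longlonglongrightarrow> 0"
  then obtain T :: "nat \<Rightarrow> ('v \<Rightarrow> real) \<Rightarrow> bool" where T: "\<And>m. is_test (T m)"
    and lim: "(\<lambda>m. risk E r0 F0 F1 m (T m)) \<longlonglongrightarrow> 0" by blast
  note F0 = assms(2) and F1 = assms(3) and s0 = assms(4) and s1 = assms(5) and ac = assms(6)
    and piP = assms(7) and spi = assms(8) and AEpi = assms(9) and eta0 = assms(10) and eta1 = assms(11)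
    and tailA = assms(12) and chiA = assms(13)
  interpret F0: prob_space F0 by (rule F0)
  interpret pi: prob_space \<pi> by (rule piP)
  have L0P: "prob_space (law0 F0)" unfolding law0_def by (rule prob_space_PiM) (rule F0)
  interpret L0: prob_space "law0 F0" by (rule L0P)
  interpret pp: pair_prob_space \<pi> \<pi>
    by (simp add: pair_prob_space_def pair_sigma_finite_def prob_space_imp_sigma_finite piP)
  have PPP: "prob_space (\<pi> \<Otimes>\<^sub>M \<pi>)" by (rule pp.prob_space_axioms)
  interpret pl: pair_sigma_finite "law0 F0" \<pi>
    by (simp add: pair_sigma_finite_def prob_space_imp_sigma_finite piP L0P)
  interpret pl2: pair_sigma_finite "\<pi> \<Otimes>\<^sub>M \<pi>" "law0 F0"
    by (simp add: pair_sigma_finite_def prob_space_imp_sigma_finite PPP L0P)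

  have sp0: "space F0 = UNIV" by (rule space_borel_eq[OF s0])
  have spL0: "space (law0 F0) = UNIV" unfolding law0_def by (simp add: space_PiM sp0 PiE_UNIV_domain)
  have spL1: "space (law1 F0 F1 p) = UNIV" for p
    unfolding law1_def by (simp add: space_PiM sp0 space_borel_eq[OF s1] PiE_UNIV_domain if_distrib[of space] cong: if_cong)
  have L1P: "prob_space (law1 F0 F1 p)" for p unfolding law1_def by (rule prob_space_PiM) (simp add: F0 F1)
  have setsL0: "sets (law0 F0) = sets (PiM UNIV (\<lambda>_::'v. borel))"
    unfolding law0_def by (rule sets_PiM_cong) (simp_all add: s0)
  have Asets: "{x. T m x} \<in> sets (law0 F0)" for m
  proof -
    have "T m \<in> measurable (law0 F0) (count_space UNIV)"
      using T[of m] unfolding is_test_def by (simp add: measurable_cong_sets[OF setsL0 refl])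
    then have "T m -` {True} \<inter> space (law0 F0) \<in> sets (law0 F0)" by (rule measurable_sets) simp
    then show ?thesis by (simp add: spL0 vimage_def)
  qed

  have chifin: "chi2 F0 F1 < \<infinity>" using chiA ennreal_less_top less_trans by (metis infinity_ennreal_def)
  obtain c0 where c0: "0 \<le> c0" "chi2 F0 F1 = ennreal c0" using chifin by (cases "chi2 F0 F1") auto
  have c0lt: "c0 < 1/\<eta> - 1" using chiA c0 by (simp add: ennreal_less_iff)
  define Q where "Q = 1 + c0"
  have Q1: "1 \<le> Q" using c0 by (simp add: Q_def)
  have Qeta: "Q * \<eta> < 1"
  proof -
    have "c0 * \<eta> < (1/\<eta> - 1) * \<eta>" using c0lt eta0 by (rule mult_strict_right_mono)
    then show ?thesis using eta0 by (simp add: Q_def algebra_simps)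
  qed
  have qeq: "(\<integral>\<^sup>+y. RN_deriv F0 F1 y * RN_deriv F0 F1 y \<partial>F0) = ennreal Q"
    using chi2_q[OF F0 F1 s0 s1 ac chifin] c0 unfolding Q_def by simp
  obtain C where C: "C > 0" and tail: "\<forall>k\<ge>1. measure (\<pi> \<Otimes>\<^sub>M \<pi>) {(P, P'). enat k \<le> num_common P P'} \<le> C * \<eta> ^ k"
    using tailA unfolding exp_intersection_tail_def by blast
  define K0 where "K0 = 1 + (Q - 1) * C * \<eta> / (1 - Q*\<eta>)"
  have K0: "1 \<le> K0" using Q1 C eta0 Qeta unfolding K0_def by simp
  have HbK: "(\<integral>\<^sup>+z. Hb Q z \<partial>(\<pi> \<Otimes>\<^sub>M \<pi>)) \<le> ennreal K0"
    unfolding K0_def by (rule Hb_int[OF PPP _ Q1 eta0 Qeta C tail]) (simp add: spi)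

  have "\<exists>P. P \<in> inf_saw E r0"
  proof (rule ccontr)
    assume "\<not> (\<exists>P. P \<in> inf_saw E r0)"
    then have "AE P in \<pi>. False" using AEpi by simp
    then show False using pi.AE_False by simp
  qed
  then obtain P0 where P0: "P0 \<in> inf_saw E r0" by blast

  define f where "f p x = (\<Prod>v\<in>set p. RN_deriv F0 F1 (x v))" for p :: "'v list" and x :: "'v \<Rightarrow> real"
  define pm where "pm m P = map P [0..<m]" for m and P :: "nat \<Rightarrow> 'v"

  have m_snd: "snd \<in> measurable (law0 F0 \<Otimes>\<^sub>M \<pi>) path_space"
    by (subst measurable_cong_sets[OF refl spi, symmetric]) (rule measurable_snd)
  have m_fst2: "fst \<in> measurable ((\<pi> \<Otimes>\<^sub>M \<pi>) \<Otimes>\<^sub>M law0 F0) (\<pi> \<Otimes>\<^sub>M \<pi>)" by (rule measurable_fst)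
  have m_pi: "(\<lambda>w. w) \<in> measurable \<pi> path_space"
    by (rule measurable_ident_sets[OF spi])
  have m_pp1: "fst \<in> measurable (\<pi> \<Otimes>\<^sub>M \<pi>) path_space"
    by (subst measurable_cong_sets[OF refl spi, symmetric]) (rule measurable_fst)
  have m_pp2: "snd \<in> measurable (\<pi> \<Otimes>\<^sub>M \<pi>) path_space"
    by (subst measurable_cong_sets[OF refl spi, symmetric]) (rule measurable_snd)
  have Mc: "(\<lambda>w. f (pm m (snd w)) (fst w)) \<in> borel_measurable (law0 F0 \<Otimes>\<^sub>M \<pi>)" for m
    unfolding f_def pm_def by (rule fpm_meas[OF m_snd measurable_fst s0])
  have Mb: "(\<lambda>P. f (pm m P) x) \<in> borel_measurable \<pi>" for m x
    unfolding f_def pm_def by (rule fpm_meas[OF m_pi _ s0]) (simp add: spL0)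
  have Md: "(\<lambda>z. f (pm m (fst z)) x * f (pm m (snd z)) x) \<in> borel_measurable (\<pi> \<Otimes>\<^sub>M \<pi>)" for m x
    unfolding f_def pm_def
    by (intro borel_measurable_times_ennreal fpm_meas[OF m_pp1 _ s0] fpm_meas[OF m_pp2 _ s0]) (simp_all add: spL0)
  have Me: "(\<lambda>w. f (pm m (fst (fst w))) (snd w) * f (pm m (snd (fst w))) (snd w)) \<in> borel_measurable ((\<pi> \<Otimes>\<^sub>M \<pi>) \<Otimes>\<^sub>M law0 F0)" for m
    unfolding f_def pm_def
    by (intro borel_measurable_times_ennreal fpm_meas[OF measurable_compose[OF m_fst2 m_pp1] measurable_snd s0]
        fpm_meas[OF measurable_compose[OF m_fst2 m_pp2] measurable_snd s0])
  have Mf: "f p \<in> borel_measurable (law0 F0)" for p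
    unfolding f_def law0_def
    by (intro borel_measurable_prod_ennreal measurable_compose[OF measurable_component_singleton]) (auto simp: s0)

  have key: "1 - risk E r0 F0 F1 m (T m) \<le> K0/2 * risk E r0 F0 F1 m (T m) + 1/2" if m1: "1 \<le> m" for m
  proof -
    define \<rho> where "\<rho> = risk E r0 F0 F1 m (T m)"
    define A where "A = {x. T m x}"
    define B where "B = {x. \<not> T m x}"
    have AsetsA[measurable]: "A \<in> sets (law0 F0)" unfolding A_def by (rule Asets)
    have rho: "\<rho> = measure (law0 F0) A + (SUP p\<in>fin_saw E r0 m. measure (law1 F0 F1 p) B)"
    proof -
      have e1: "{x \<in> space (law0 F0). T m x} = A" by (auto simp: A_def spL0)
      have e2: "{x \<in> space (law1 F0 F1 p). \<not> T m x} = B" for p by (auto simp: B_def spL1)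
      show ?thesis unfolding \<rho>_def risk_def by (simp only: e1 e2)
    qed
    have insaw: "pm m P \<in> fin_saw E r0 m" if "P \<in> inf_saw E r0" for P
    proof -
      have inj: "inj P" and P0r: "P 0 = r0" and ed: "\<And>i. E (P i) (P (Suc i))" using that by (auto simp: inf_saw_def)
      have "hd (map P [0..<m]) = P 0" using m1 by (simp add: hd_map hd_upt)
      moreover have "distinct (map P [0..<m])" by (simp add: distinct_map inj_on_subset[OF inj subset_UNIV])
      moreover have "E (map P [0..<m] ! i) (map P [0..<m] ! Suc i)" if "Suc i < m" for i
        using that ed[of i] by simp
      moreover have "map P [0..<m] \<noteq> []" using m1 by simp
      ultimately show ?thesis using P0r unfolding fin_saw_def pm_def by simp
    qed
    have bdd: "bdd_above ((\<lambda>p. measure (law1 F0 F1 p) B) ` fin_saw E r0 m)"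
      by (intro bdd_aboveI[where M=1]) (auto intro: prob_space.prob_le_1[OF L1P])
    have Ble: "measure (law1 F0 F1 p) B \<le> (SUP p\<in>fin_saw E r0 m. measure (law1 F0 F1 p) B)" if "p \<in> fin_saw E r0 m" for p
      by (rule cSUP_upper[OF that bdd])
    have SUP0: "0 \<le> (SUP p\<in>fin_saw E r0 m. measure (law1 F0 F1 p) B)"
      using Ble[OF insaw[OF P0]] measure_nonneg order_trans by blast
    have A_le: "measure (law0 F0) A \<le> \<rho>" using rho SUP0 by simp
    have B_le: "measure (law1 F0 F1 p) B \<le> \<rho>" if "p \<in> fin_saw E r0 m" for p
      using rho Ble[OF that] measure_nonneg[of "law0 F0" A] by linarith
    have Asets1: "A \<in> sets (law1 F0 F1 p)" for p
      unfolding law1_density[OF F0 F1 s0 s1 ac] by simp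
    have emA: "emeasure (law1 F0 F1 p) A = (\<integral>\<^sup>+x. f p x * indicator A x \<partial>law0 F0)" for p
      unfolding law1_density[OF F0 F1 s0 s1 ac] f_def[abs_def]
      by (rule emeasure_density[OF _ AsetsA]) (use Mf[of p] in \<open>simp add: f_def[abs_def]\<close>)
    have lowA: "ennreal (1 - \<rho>) \<le> (\<integral>\<^sup>+x. f p x * indicator A x \<partial>law0 F0)" if "p \<in> fin_saw E r0 m" for p
    proof -
      interpret L1: prob_space "law1 F0 F1 p" by (rule L1P)
      have "measure (law1 F0 F1 p) (space (law1 F0 F1 p) - A) = 1 - measure (law1 F0 F1 p) A"
        by (rule L1.prob_compl[OF Asets1])
      moreover have "space (law1 F0 F1 p) - A = B" unfolding A_def B_def spL1 by auto
      ultimately have "1 - \<rho> \<le> measure (law1 F0 F1 p) A" using B_le[OF that] by simp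
      then have "ennreal (1 - \<rho>) \<le> emeasure (law1 F0 F1 p) A"
        by (simp add: L1.emeasure_eq_measure ennreal_leI)
      then show ?thesis using emA by simp
    qed
    define g where "g x = (\<integral>\<^sup>+P. f (pm m P) x \<partial>\<pi>)" for x
    have step1: "ennreal (1 - \<rho>) \<le> (\<integral>\<^sup>+P. (\<integral>\<^sup>+x. f (pm m P) x * indicator A x \<partial>law0 F0) \<partial>\<pi>)"
    proof -
      have "ennreal (1 - \<rho>) = (\<integral>\<^sup>+P. ennreal (1 - \<rho>) \<partial>\<pi>)" by (simp add: pi.emeasure_space_1)
      also have "\<dots> \<le> (\<integral>\<^sup>+P. (\<integral>\<^sup>+x. f (pm m P) x * indicator A x \<partial>law0 F0) \<partial>\<pi>)"
        by (rule nn_integral_mono_AE, rule eventually_mono[OF AEpi]) (blast intro: lowA insaw)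
      finally show ?thesis .
    qed
    have Ma: "(\<lambda>(x, P). f (pm m P) x * indicator A x) \<in> borel_measurable (law0 F0 \<Otimes>\<^sub>M \<pi>)"
    proof -
      have [measurable]: "(\<lambda>w. f (pm m (snd w)) (fst w)) \<in> borel_measurable (law0 F0 \<Otimes>\<^sub>M \<pi>)" by (rule Mc)
      have "(\<lambda>w. f (pm m (snd w)) (fst w) * indicator A (fst w)) \<in> borel_measurable (law0 F0 \<Otimes>\<^sub>M \<pi>)" by measurable
      then show ?thesis by (simp add: case_prod_beta')
    qed
    have step2: "(\<integral>\<^sup>+P. (\<integral>\<^sup>+x. f (pm m P) x * indicator A x \<partial>law0 F0) \<partial>\<pi>) = (\<integral>\<^sup>+x. g x * indicator A x \<partial>law0 F0)"
    proof -
      have "(\<integral>\<^sup>+P. (\<integral>\<^sup>+x. f (pm m P) x * indicator A x \<partial>law0 F0) \<partial>\<pi>) = (\<integral>\<^sup>+x. (\<integral>\<^sup>+P. f (pm m P) x * indicator A x \<partial>\<pi>) \<partial>law0 F0)"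
        by (rule pl.Fubini'[OF Ma])
      also have "\<dots> = (\<integral>\<^sup>+x. g x * indicator A x \<partial>law0 F0)"
        unfolding g_def by (rule nn_integral_cong) (rule nn_integral_multc[OF Mb])
      finally show ?thesis .
    qed
    define d where "d = 1/(2*K0)"
    have d0: "0 < d" using K0 by (simp add: d_def)
    have cd: "1/(4*d) = K0/2" using K0 by (simp add: d_def)
    have pw: "g x * indicator A x \<le> ennreal (K0/2) * indicator A x + ennreal d * (g x * g x)" for x
    proof (cases "x \<in> A")
      case True
      then show ?thesis using amgm_enn[OF d0, of "g x"] unfolding cd by simp
    qed simp
    have gm: "g \<in> borel_measurable (law0 F0)"
    proof -
      have "case_prod (\<lambda>x P. f (pm m P) x) \<in> borel_measurable (law0 F0 \<Otimes>\<^sub>M \<pi>)"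
        using Mc by (simp add: case_prod_beta')
      then show ?thesis unfolding g_def[abs_def] by (rule pi.borel_measurable_nn_integral)
    qed
    have step3: "(\<integral>\<^sup>+x. g x * indicator A x \<partial>law0 F0) \<le> ennreal (K0/2) * emeasure (law0 F0) A + ennreal d * (\<integral>\<^sup>+x. g x * g x \<partial>law0 F0)"
    proof -
      have "(\<integral>\<^sup>+x. g x * indicator A x \<partial>law0 F0) \<le> (\<integral>\<^sup>+x. ennreal (K0/2) * indicator A x + ennreal d * (g x * g x) \<partial>law0 F0)"
        by (rule nn_integral_mono) (rule pw)
      also have "\<dots> = (\<integral>\<^sup>+x. ennreal (K0/2) * indicator A x \<partial>law0 F0) + (\<integral>\<^sup>+x. ennreal d * (g x * g x) \<partial>law0 F0)"
        using gm by (intro nn_integral_add) auto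
      also have "\<dots> = ennreal (K0/2) * emeasure (law0 F0) A + ennreal d * (\<integral>\<^sup>+x. g x * g x \<partial>law0 F0)"
        using gm by (simp add: nn_integral_cmult nn_integral_cmult_indicator)
      finally show ?thesis .
    qed
    have gg: "g x * g x = (\<integral>\<^sup>+z. f (pm m (fst z)) x * f (pm m (snd z)) x \<partial>(\<pi> \<Otimes>\<^sub>M \<pi>))" for x
    proof -
      have "g x * g x = (\<integral>\<^sup>+P. f (pm m P) x * g x \<partial>\<pi>)"
        by (simp only: g_def[of x] nn_integral_multc[OF Mb])
      also have "\<dots> = (\<integral>\<^sup>+P. (\<integral>\<^sup>+P'. f (pm m P) x * f (pm m P') x \<partial>\<pi>) \<partial>\<pi>)"
        unfolding g_def by (intro nn_integral_cong) (rule nn_integral_cmult[OF Mb, symmetric])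
      also have "\<dots> = (\<integral>\<^sup>+z. f (pm m (fst z)) x * f (pm m (snd z)) x \<partial>(\<pi> \<Otimes>\<^sub>M \<pi>))"
        using pi.nn_integral_fst[of "\<lambda>z. f (pm m (fst z)) x * f (pm m (snd z)) x" \<pi>] Md by simp
      finally show ?thesis .
    qed
    have step4: "(\<integral>\<^sup>+x. g x * g x \<partial>law0 F0) \<le> ennreal K0"
    proof -
      have "(\<integral>\<^sup>+x. g x * g x \<partial>law0 F0) = (\<integral>\<^sup>+x. (\<integral>\<^sup>+z. f (pm m (fst z)) x * f (pm m (snd z)) x \<partial>(\<pi> \<Otimes>\<^sub>M \<pi>)) \<partial>law0 F0)"
        by (simp add: gg)
      also have "\<dots> = (\<integral>\<^sup>+z. (\<integral>\<^sup>+x. f (pm m (fst z)) x * f (pm m (snd z)) x \<partial>law0 F0) \<partial>(\<pi> \<Otimes>\<^sub>M \<pi>))"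
        by (rule pl2.Fubini') (use Me[of m] in \<open>simp add: case_prod_beta'\<close>)
      also have "\<dots> \<le> (\<integral>\<^sup>+z. Hb Q z \<partial>(\<pi> \<Otimes>\<^sub>M \<pi>))"
      proof (rule nn_integral_mono)
        fix z :: "(nat \<Rightarrow> 'v) \<times> (nat \<Rightarrow> 'v)"
        have "(\<integral>\<^sup>+x. f (pm m (fst z)) x * f (pm m (snd z)) x \<partial>law0 F0)
            = ennreal Q ^ card (set (pm m (fst z)) \<inter> set (pm m (snd z)))"
          unfolding f_def using law0_cross[OF F0 F1 s0 s1 ac, of "set (pm m (fst z))" "set (pm m (snd z))"] qeq by simp
        also have "\<dots> = ennreal (Q ^ card (set (pm m (fst z)) \<inter> set (pm m (snd z))))"
          using Q1 by (simp add: ennreal_power)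
        also have "\<dots> \<le> Hb Q z"
          by (rule Hb_ge[OF Q1]) (unfold pm_def, rule card_le_nc)
        finally show "(\<integral>\<^sup>+x. f (pm m (fst z)) x * f (pm m (snd z)) x \<partial>law0 F0) \<le> Hb Q z" .
      qed
      also have "\<dots> \<le> ennreal K0" by (rule HbK)
      finally show ?thesis .
    qed
    have "ennreal (1 - \<rho>) \<le> (\<integral>\<^sup>+x. g x * indicator A x \<partial>law0 F0)" using step1 step2 by simp
    also have "\<dots> \<le> ennreal (K0/2) * emeasure (law0 F0) A + ennreal d * (\<integral>\<^sup>+x. g x * g x \<partial>law0 F0)" by (rule step3)
    also have "\<dots> \<le> ennreal (K0/2) * emeasure (law0 F0) A + ennreal d * ennreal K0"
      by (intro add_left_mono mult_left_mono step4) simp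
    also have "\<dots> \<le> ennreal (K0/2) * ennreal \<rho> + ennreal d * ennreal K0"
      using A_le by (intro add_right_mono mult_left_mono) (simp_all add: L0.emeasure_eq_measure ennreal_leI)
    also have "\<dots> = ennreal (K0/2 * \<rho> + 1/2)"
    proof -
      have r0: "0 \<le> \<rho>" using A_le measure_nonneg order_trans by blast
      have "d * K0 = 1/2" using K0 by (simp add: d_def)
      then show ?thesis using r0 K0 d0 by (simp add: ennreal_mult[symmetric] ennreal_plus[symmetric] del: ennreal_plus)
    qed
    finally have "ennreal (1 - \<rho>) \<le> ennreal (K0/2 * \<rho> + 1/2)" .
    moreover have "0 \<le> K0/2 * \<rho> + 1/2"
    proof -
      have "0 \<le> \<rho>" using A_le measure_nonneg[of "law0 F0" A] by linarith
      then show ?thesis using K0 by (intro add_nonneg_nonneg mult_nonneg_nonneg) auto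
    qed
    ultimately show ?thesis unfolding \<rho>_def by simp
  qed
  have pos: "0 < 1/(K0+2)" using K0 by simp
  from order_tendstoD(2)[OF lim pos] obtain N where N: "\<And>n. n \<ge> N \<Longrightarrow> risk E r0 F0 F1 n (T n) < 1/(K0+2)"
    by (auto simp: eventually_sequentially)
  define m where "m = max N 1"
  have lt: "risk E r0 F0 F1 m (T m) < 1/(K0+2)" using N by (simp add: m_def)
  have k: "1 - risk E r0 F0 F1 m (T m) \<le> K0/2 * risk E r0 F0 F1 m (T m) + 1/2" using key by (simp add: m_def)
  have "1/2 \<le> (K0/2 + 1) * risk E r0 F0 F1 m (T m)" using k by (simp add: algebra_simps)
  moreover have "(K0/2 + 1) * risk E r0 F0 F1 m (T m) < (K0/2 + 1) * (1/(K0+2))"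
    using lt K0 by (intro mult_strict_left_mono) auto
  moreover have "(K0/2 + 1) * (1/(K0+2)) = 1/2" using K0 by (simp add: field_simps)
  ultimately show False by simp
qed

end
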